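(* Let $\mathbb T=\mathbb R/2\pi\mathbb Z$ with normalized Lebesgue measure $dx$, $\rho$ a smooth strictly positive probability density, $(t,x)\mapsto\phi_t(x)$ smooth on $[0,1]\times\mathbb T$, $X_t$ the flow of $\frac{dX_t}{dt}=\partial_x\phi_t(X_t)$, $X_0=\mathrm{id}$, and $\rho_t$ the density of $(X_t)_\#(\rho\,dx)$; set $\hat\rho_t=1/\big((\int_{\mathbb T}\frac{dx}{\rho_t})\rho_t\big)$. Let $g:[0,1]\times\mathbb T\to\mathbb R$, $g_t\in C^2(\mathbb T)$, $C^1$ in $t$, with $\int_{\mathbb T}g_t\,dx=0$, be a solution of $$\frac{dg_t}{dt}=-\partial_xg_t\,\partial_x\phi_t+\Big(\int_{\mathbb T}\partial_xg_t\,\partial_x\phi_t\,dx\Big)\hat\rho_t.$$ Then $\int_{\mathbb T}|g_t|^2\rho_t\,dx=\int_{\mathbb T}|g_0|^2\rho\,dx$ for all $t\in[0,1]$. *)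

theory Defs
  imports "HOL-Analysis.Analysis"
begin

text \<open>The circle T = R/2piZ is modelled by 2pi-periodic functions on R.
  Normalized Lebesgue measure on T: uniform (probability) measure on [0,2pi).\<close>

definition Tmeas :: "real measure" where
  "Tmeas = uniform_measure lborel {0..<2*pi}"

definition Tint :: "(real \<Rightarrow> real) \<Rightarrow> real" where
  "Tint f = integral\<^sup>L Tmeas f"

definition tmod :: "real \<Rightarrow> real" where
  "tmod x = x - 2*pi * of_int \<lfloor>x / (2*pi)\<rfloor>"

definition periodic2pi :: "(real \<Rightarrow> real) \<Rightarrow> bool" where
  "periodic2pi f \<longleftrightarrow> (\<forall>x. f (x + 2*pi) = f x)"

definition Cn :: "nat \<Rightarrow> (real \<Rightarrow> real) \<Rightarrow> bool" where
  "Cn k f \<longleftrightarrow> (\<forall>j<k. \<forall>x. ((deriv ^^ j) f) differentiable (at x))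
              \<and> continuous_on UNIV ((deriv ^^ k) f)"

definition smooth1 :: "(real \<Rightarrow> real) \<Rightarrow> bool" where
  "smooth1 f \<longleftrightarrow> (\<forall>k. Cn k f)"

fun Ck2 :: "nat \<Rightarrow> (real \<times> real) set \<Rightarrow> (real \<times> real \<Rightarrow> real) \<Rightarrow> bool" where
  "Ck2 0 S f = continuous_on S f"
| "Ck2 (Suc k) S f = (\<exists>D1 D2.
      (\<forall>p\<in>S. (f has_derivative (\<lambda>h. D1 p * fst h + D2 p * snd h)) (at p within S))
      \<and> Ck2 k S D1 \<and> Ck2 k S D2)"

definition smooth2 :: "(real \<times> real) set \<Rightarrow> (real \<times> real \<Rightarrow> real) \<Rightarrow> bool" where
  "smooth2 S f \<longleftrightarrow> (\<forall>k. Ck2 k S f)"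

end

theory Submission
  imports Defs
begin

lemma Tmeas_sets[simp, measurable_cong]: "sets Tmeas = sets borel"
  by (simp add: Tmeas_def)
lemma Tmeas_space[simp]: "space Tmeas = UNIV"
  by (simp add: Tmeas_def)

lemma Tmeas_eq: "Tmeas = density lborel (\<lambda>x. ennreal (indicator {0..<2*pi} x / (2*pi)))"
proof -
  have e: "1 / ennreal (2*pi) = ennreal (1/(2*pi))" using divide_ennreal[of 1 "2*pi"] by simp
  show ?thesis
  unfolding Tmeas_def uniform_measure_def
  by (intro density_cong) (auto simp: indicator_def e)
qed

lemma Tmeas_finite: "finite_measure Tmeas"
proof (rule finite_measureI)
  have "emeasure Tmeas (space Tmeas) = emeasure lborel ({0..<2*pi} \<inter> UNIV) / emeasure lborel {0..<2*pi}"
    unfolding Tmeas_def by (subst emeasure_uniform_measure) auto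
  also have "\<dots> = 1" using divide_ennreal[of "2*pi" "2*pi"] by simp
  finally show "emeasure Tmeas (space Tmeas) \<noteq> \<infinity>" by simp
qed

interpretation Tfin: finite_measure Tmeas by (rule Tmeas_finite)

lemma meas_cont: "continuous_on UNIV f \<Longrightarrow> (f::real\<Rightarrow>real) \<in> borel_measurable Tmeas"
  using borel_measurable_continuous_onI measurable_cong_sets by (metis Tmeas_sets)

lemma integrable_cont_bdd:
  assumes "continuous_on UNIV f" "\<And>x. \<bar>f x\<bar> \<le> B"
  shows "integrable Tmeas (f::real\<Rightarrow>real)"
  using assms by (intro Tfin.integrable_const_bound[where B=B]) (auto intro: meas_cont)

lemma Tint_HK:
  assumes "continuous_on UNIV k"
  shows "Tint k = integral {0..2*pi} k / (2*pi)"
proof -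
  have m: "k \<in> borel_measurable borel" using assms by (rule borel_measurable_continuous_onI)
  then have m': "k \<in> borel_measurable lborel" by simp
  have "Tint k = integral\<^sup>L lborel (\<lambda>x. (indicator {0..<2*pi} x / (2*pi)) * k x)"
    unfolding Tint_def Tmeas_eq
    by (subst integral_density) (auto simp: m m')
  also have "\<dots> = (LINT x:{0..<2*pi}|lborel. k x) / (2*pi)"
    by (simp add: set_lebesgue_integral_def indicator_def)
  also have "(LINT x:{0..<2*pi}|lborel. k x) = integral {0..<2*pi} k"
  proof (rule set_borel_integral_eq_integral)
    have "set_integrable lborel {0..2*pi} k"
      by (rule borel_integrable_atLeastAtMost') (rule continuous_on_subset[OF assms], auto)
    then show "set_integrable lborel {0..<2*pi} k"
      by (rule set_integrable_subset) auto
  qed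
  also have "integral {0..<2*pi} k = integral {0..2*pi} k"
  proof -
    have "(k has_integral y) {0..<2*pi} \<longleftrightarrow> (k has_integral y) {0..2*pi}" for y
      by (rule has_integral_spike_set_eq) (auto intro: negligible_subset[OF negligible_sing[of "2*pi"]])
    then show ?thesis by (simp add: integral_def integrable_on_def)
  qed
  finally show ?thesis .
qed

lemma periodic_nat: "periodic2pi f \<Longrightarrow> f (x + 2*pi* real n) = f x"
proof (induction n arbitrary: x)
  case (Suc n)
  have "f (x + 2*pi* real (Suc n)) = f ((x + 2*pi* real n) + 2*pi)" by (simp add: algebra_simps)
  also have "\<dots> = f (x + 2*pi* real n)" using Suc.prems unfolding periodic2pi_def by blast
  finally show ?case using Suc by simp
qed simp

lemma periodic_int: "periodic2pi f \<Longrightarrow> f (x + 2*pi * of_int k) = f x"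
proof (cases "k \<ge> 0")
  case True
  assume p: "periodic2pi f"
  then show ?thesis using periodic_nat[OF p, of x "nat k"] True by simp
next
  case False
  assume p: "periodic2pi f"
  have "f ((x + 2*pi * of_int k) + 2*pi* real (nat (-k))) = f (x + 2*pi * of_int k)"
    by (rule periodic_nat[OF p])
  moreover have "(x + 2*pi * of_int k) + 2*pi* real (nat (-k)) = x" using False by simp
  ultimately show ?thesis by simp
qed

lemma tmod_range: "tmod x \<in> {0..<2*pi}"
proof -
  define y where "y = x / (2*pi)"
  have x: "x = 2*pi*y" by (simp add: y_def)
  have "of_int \<lfloor>y\<rfloor> \<le> y" "y < of_int \<lfloor>y\<rfloor> + 1"
    by linarith+
  then have "2*pi * of_int \<lfloor>y\<rfloor> \<le> 2*pi*y" "2*pi*y < 2*pi*(of_int \<lfloor>y\<rfloor> + 1)"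
    using pi_gt_zero by (intro mult_left_mono mult_strict_left_mono; simp)+
  then show ?thesis unfolding tmod_def y_def[symmetric] using x by (auto simp: algebra_simps)
qed

lemma tmod_periodic: "periodic2pi f \<Longrightarrow> f (tmod x) = f x"
  unfolding tmod_def using periodic_int[of f "x - 2*pi * of_int \<lfloor>x / (2*pi)\<rfloor>" "\<lfloor>x / (2*pi)\<rfloor>"]
  by simp

lemma tmod_measurable: "tmod \<in> borel_measurable borel"
  unfolding tmod_def by measurable

lemma window_integral:
  fixes k :: "real \<Rightarrow> real"
  assumes c: "continuous_on UNIV k" and p: "periodic2pi k"
  shows "integral {a..a+2*pi} k = integral {0..2*pi} k"
proof -
  define n where "n = \<lfloor>a / (2*pi)\<rfloor>"
  define b where "b = tmod a"
  have b: "0 \<le> b" "b < 2*pi" using tmod_range[of a] by (auto simp: b_def)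
  have ab: "a = b + 2*pi * of_int n" by (simp add: b_def tmod_def n_def)
  have kk: "(\<lambda>x. k (x + 2*pi * of_int n)) = k" using periodic_int[OF p] by auto
  have "integral {a..a+2*pi} k = integral {a - 2*pi * of_int n..a+2*pi - 2*pi * of_int n} (\<lambda>x. k (x + 2*pi * of_int n))"
    by (rule integral_shift_real_ivl[symmetric])
  also have "\<dots> = integral {b..b+2*pi} k" using kk ab by simp
  also have "\<dots> = integral {b..2*pi} k + integral {2*pi..b+2*pi} k"
    using b by (intro Henstock_Kurzweil_Integration.integral_combine[symmetric]) (auto intro!: integrable_continuous_interval continuous_on_subset[OF c])
  also have "integral {2*pi..b+2*pi} k = integral {0..b} k"
  proof -
    have kk1: "(\<lambda>x. k (x + 2*pi)) = k" using p unfolding periodic2pi_def by auto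
    have "integral {2*pi..b+2*pi} k = integral {2*pi - 2*pi..b+2*pi-2*pi} (\<lambda>x. k (x + 2*pi))"
      by (rule integral_shift_real_ivl[symmetric])
    then show ?thesis using kk1 by simp
  qed
  also have "integral {b..2*pi} k + integral {0..b} k = integral {0..2*pi} k"
    using b Henstock_Kurzweil_Integration.integral_combine[of 0 b "2*pi" k]
      integrable_continuous_interval[OF continuous_on_subset[OF c], of 0 "2*pi"]
    by (simp add: add.commute)
  finally show ?thesis .
qed

lemma Tint_window:
  fixes k :: "real \<Rightarrow> real"
  assumes c: "continuous_on UNIV k" and p: "periodic2pi k"
  shows "Tint k = integral {a..a+2*pi} k / (2*pi)"
  using Tint_HK[OF c] window_integral[OF c p] by simp

lemma affine_subst:
  fixes H :: "real \<Rightarrow> real"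
  assumes c: "continuous_on UNIV H" and l: "l > 0" and a: "a \<ge> 0"
  shows "integral {x0 - a/l..x0 + a/l} (\<lambda>x. H (l*(x - x0))) = integral {-a..a} H / l"
proof -
  have "((\<lambda>x. l *\<^sub>R H (l*(x - x0))) has_integral (integral {l*((x0 - a/l) - x0)..l*((x0 + a/l) - x0)} H)) {x0 - a/l..x0 + a/l}"
    apply (rule has_integral_substitution[where c="-a" and d=a])
    using l a by (auto intro!: derivative_eq_intros continuous_on_subset[OF c] simp: field_simps)
  moreover have "l*((x0 - a/l) - x0) = -a" "l*((x0 + a/l) - x0) = a" using l by (auto simp: field_simps)
  ultimately have "((\<lambda>x. l * H (l*(x - x0))) has_integral (integral {-a..a} H)) {x0 - a/l..x0 + a/l}" by simp
  then have "((\<lambda>x. H (l*(x - x0))) has_integral (integral {-a..a} H / l)) {x0 - a/l..x0 + a/l}"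
    using has_integral_cmul[where c="1/l"] l by (fastforce dest: has_integral_cmul[where c="1/l"])
  then show ?thesis by (rule integral_unique)
qed

lemma deriv_unique_T:
  assumes "t \<in> {0..1::real}" "(f has_real_derivative a) (at t within {0..1})"
    "(f has_real_derivative b) (at t within {0..1})"
  shows "a = b"
  using vector_derivative_unique_within_closed_interval[of 0 1 t f a b] assms
  by (simp add: has_real_derivative_iff_has_vector_derivative)

lemma mvt_S:
  fixes f :: "real \<Rightarrow> real"
  assumes "a \<le> b" "{a..b} \<subseteq> S" "\<And>s. s \<in> S \<Longrightarrow> (f has_real_derivative f' s) (at s within S)"
  shows "\<exists>\<xi>\<in>{a..b}. f b - f a = f' \<xi> * (b - a)"
proof -
  have "\<exists>\<xi>\<in>{a..b}. f b - f a = (\<lambda>h. f' \<xi> * h) (b - a)"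
  proof (rule mvt_very_simple[OF assms(1)])
    fix x assume "a \<le> x" "x \<le> b"
    then have "x \<in> S" using assms(2) by auto
    from assms(3)[OF this] have "(f has_real_derivative f' x) (at x within {a..b})"
      using assms(2) by (rule DERIV_subset)
    then show "(f has_derivative (\<lambda>h. f' x * h)) (at x within {a..b})"
      by (simp add: has_field_derivative_def)
  qed
  then show ?thesis by simp
qed

lemma lip_S:
  fixes f :: "real \<Rightarrow> real"
  assumes "convex S" "\<And>s. s \<in> S \<Longrightarrow> (f has_real_derivative f' s) (at s within S)"
    "\<And>s. s \<in> S \<Longrightarrow> \<bar>f' s\<bar> \<le> B" "a \<in> S" "b \<in> S"
  shows "\<bar>f a - f b\<bar> \<le> B * \<bar>a - b\<bar>"
proof -
  have "closed_segment a b \<subseteq> S" using assms(1,4,5) convex_contains_segment by blast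
  then have sub: "{min a b..max a b} \<subseteq> S"
    by (auto simp: closed_segment_eq_real_ivl split: if_splits)
  obtain \<xi> where x: "\<xi> \<in> {min a b..max a b}" "f (max a b) - f (min a b) = f' \<xi> * (max a b - min a b)"
    using mvt_S[OF _ sub assms(2)] by force
  have "\<xi> \<in> S" using x sub by auto
  then have "\<bar>f' \<xi>\<bar> \<le> B" using assms(3) by auto
  then have "\<bar>f (max a b) - f (min a b)\<bar> \<le> B * \<bar>max a b - min a b\<bar>"
    using x by (simp add: abs_mult mult_right_mono)
  then show ?thesis by (cases "a \<le> b") (auto simp: abs_minus_commute)
qed

lemma ode_compare:
  fixes V :: "real \<Rightarrow> real \<Rightarrow> real" and Y1 Y2 :: "real \<Rightarrow> real"
  assumes L: "L \<ge> 0" and lip: "\<And>t a b. t \<in> {0..1} \<Longrightarrow> \<bar>V t a - V t b\<bar> \<le> L * \<bar>a - b\<bar>"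
    and d1: "\<And>t. t \<in> {0..1} \<Longrightarrow> (Y1 has_real_derivative V t (Y1 t)) (at t within {0..1})"
    and d2: "\<And>t. t \<in> {0..1} \<Longrightarrow> (Y2 has_real_derivative V t (Y2 t)) (at t within {0..1})"
    and t: "t \<in> {0..1}"
  shows "(Y1 t - Y2 t)^2 \<le> exp (2*L*t) * (Y1 0 - Y2 0)^2"
    and "exp (- (2*L*t)) * (Y1 0 - Y2 0)^2 \<le> (Y1 t - Y2 t)^2"
proof -
  define D where "D s = (Y1 s - Y2 s)^2" for s
  define D' where "D' s = 2 * (Y1 s - Y2 s) * (V s (Y1 s) - V s (Y2 s))" for s
  have dD: "(D has_real_derivative D' s) (at s within {0..1})" if "s \<in> {0..1}" for s
    unfolding D_def D'_def
    using d1[OF that] d2[OF that]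
    by (auto intro!: derivative_eq_intros simp: algebra_simps)
  have bD: "\<bar>D' s\<bar> \<le> 2 * L * D s" if "s \<in> {0..1}" for s
  proof -
    have "\<bar>D' s\<bar> = 2 * \<bar>Y1 s - Y2 s\<bar> * \<bar>V s (Y1 s) - V s (Y2 s)\<bar>"
      unfolding D'_def abs_mult by simp
    also have "\<dots> \<le> 2 * \<bar>Y1 s - Y2 s\<bar> * (L * \<bar>Y1 s - Y2 s\<bar>)"
      by (intro mult_left_mono lip that) auto
    also have "\<dots> = 2 * L * D s" by (simp add: D_def power2_eq_square abs_mult_self_eq)
    finally show ?thesis .
  qed
  define EA where "EA s = exp (- (2*L* s)) * D s" for s
  define EB where "EB s = exp (2*L* s) * D s" for s
  have dE1: "(EA has_real_derivative exp (- (2*L* s)) * (D' s - 2*L*D s)) (at s within {0..1})"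
    if "s \<in> {0..1}" for s
    unfolding EA_def using dD[OF that]
    by (auto intro!: derivative_eq_intros simp: algebra_simps)
  have dE2: "(EB has_real_derivative exp (2*L* s) * (D' s + 2*L*D s)) (at s within {0..1})"
    if "s \<in> {0..1}" for s
    unfolding EB_def using dD[OF that]
    by (auto intro!: derivative_eq_intros simp: algebra_simps)
  have t0: "0 \<le> t" "{0..t} \<subseteq> {0..1}" using t by auto
  obtain \<xi> where x: "\<xi> \<in> {0..t}" "EA t - EA 0 = exp (- (2*L*\<xi>)) * (D' \<xi> - 2*L*D \<xi>) * (t - 0)"
    using mvt_S[OF t0 dE1] by blast
  have "D' \<xi> - 2*L*D \<xi> \<le> 0" using bD[of \<xi>] x t0 by auto
  then have "exp (- (2*L*\<xi>)) * (D' \<xi> - 2*L*D \<xi>) * (t - 0) \<le> 0"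
    using t0 by (simp add: mult_nonpos_nonneg mult_nonneg_nonpos)
  then have "EA t \<le> EA 0" using x by simp
  then have "exp (- (2*L*t)) * D t \<le> D 0" by (simp add: EA_def)
  then have "exp (2*L*t) * (exp (- (2*L*t)) * D t) \<le> exp (2*L*t) * D 0" by simp
  then show "(Y1 t - Y2 t)^2 \<le> exp (2*L*t) * (Y1 0 - Y2 0)^2"
    by (simp add: D_def mult.assoc[symmetric] exp_add[symmetric])
  obtain \<eta> where y: "\<eta> \<in> {0..t}" "EB t - EB 0 = exp (2*L*\<eta>) * (D' \<eta> + 2*L*D \<eta>) * (t - 0)"
    using mvt_S[OF t0 dE2] by blast
  have "D' \<eta> + 2*L*D \<eta> \<ge> 0" using bD[of \<eta>] y t0 by auto
  then have "exp (2*L*\<eta>) * (D' \<eta> + 2*L*D \<eta>) * (t - 0) \<ge> 0"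
    using t0 by simp
  then have "EB t \<ge> EB 0" using y by simp
  then have "exp (2*L*t) * D t \<ge> D 0" by (simp add: EB_def)
  then have "exp (- (2*L*t)) * (exp (2*L*t) * D t) \<ge> exp (- (2*L*t)) * D 0" by simp
  then show "exp (- (2*L*t)) * (Y1 0 - Y2 0)^2 \<le> (Y1 t - Y2 t)^2"
    by (simp add: D_def mult.assoc[symmetric] exp_add[symmetric])
qed

lemma joint_chain:
  fixes g G :: "real \<Rightarrow> real \<Rightarrow> real" and Y :: "real \<Rightarrow> real"
  assumes Gc: "continuous_on ({0..1} \<times> UNIV) (\<lambda>(s, y). G s y)"
    and gt: "\<And>s y. s \<in> {0..1} \<Longrightarrow> ((\<lambda>s. g s y) has_real_derivative G s y) (at s within {0..1})"
    and gy: "(g t has_real_derivative gx) (at (Y t))"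
    and Yd: "(Y has_real_derivative Y') (at t within {0..1})"
    and t: "t \<in> {0..1}"
  shows "((\<lambda>s. g s (Y s)) has_real_derivative (G t (Y t) + gx * Y')) (at t within {0..1})"
proof -
  let ?T = "{0..1::real}"
  define A where "A s = (g s (Y s) - g t (Y s)) / (s - t)" for s
  define B where "B s = (g t (Y s) - g t (Y t)) / (s - t)" for s
  have "((\<lambda>s. g t (Y s)) has_real_derivative gx * Y') (at t within ?T)"
    using DERIV_chain2[OF gy Yd] .
  then have limB: "(B \<longlongrightarrow> gx * Y') (at t within ?T)"
    unfolding B_def has_field_derivative_iff .
  have limA: "(A \<longlongrightarrow> G t (Y t)) (at t within ?T)"
  proof (rule tendstoI)
    fix e :: real assume e: "e > 0"
    obtain d where d: "d > 0" "\<And>p. p \<in> ?T \<times> UNIV \<Longrightarrow> dist p (t, Y t) < d \<Longrightarrow>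
        dist ((\<lambda>(s, y). G s y) p) ((\<lambda>(s, y). G s y) (t, Y t)) < e"
      using Gc e t unfolding continuous_on_iff by (metis SigmaI UNIV_I)
    have "continuous (at t within ?T) Y" using Yd by (rule DERIV_continuous)
    then have "((\<lambda>s. Y s) \<longlongrightarrow> Y t) (at t within ?T)" by (simp add: continuous_within)
    then have ev1: "eventually (\<lambda>s. dist (Y s) (Y t) < d/2) (at t within ?T)"
      using d(1) by (intro tendstoD) auto
    have ev2: "eventually (\<lambda>s. s \<in> ?T \<and> s \<noteq> t \<and> dist s t < d/2) (at t within ?T)"
      unfolding eventually_at using d(1) by (intro exI[of _ "d/2"]) auto
    show "eventually (\<lambda>s. dist (A s) (G t (Y t)) < e) (at t within ?T)"
      using ev1 ev2
    proof eventually_elim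
      case (elim s)
      then have s: "s \<in> ?T" "s \<noteq> t" "\<bar>s - t\<bar> < d/2" "\<bar>Y s - Y t\<bar> < d/2" by (auto simp: dist_real_def)
      have "\<exists>\<xi>\<in>{min s t..max s t}. g (max s t) (Y s) - g (min s t) (Y s) = G \<xi> (Y s) * (max s t - min s t)"
        by (rule mvt_S[where S="?T"]) (use s t gt in auto)
      then obtain \<xi> where xi: "\<xi> \<in> {min s t..max s t}" "g (max s t) (Y s) - g (min s t) (Y s) = G \<xi> (Y s) * (max s t - min s t)"
        by blast
      have As: "A s = G \<xi> (Y s)"
        using xi s(2) unfolding A_def by (cases "s \<le> t") (auto simp: field_simps)
      have xiT: "\<xi> \<in> ?T" using xi s t by auto
      have "dist (\<xi>, Y s) (t, Y t) \<le> dist \<xi> t + dist (Y s) (Y t)"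
        using sqrt_sum_squares_le_sum_abs[of "dist \<xi> t" "dist (Y s) (Y t)"] by (simp add: dist_Pair_Pair)
      also have "\<dots> < d"
      proof -
        have "\<bar>\<xi> - t\<bar> \<le> \<bar>s - t\<bar>" using xi(1) by (auto simp: min_def max_def split: if_splits)
        then show ?thesis using s by (simp add: dist_real_def)
      qed
      finally have "dist (\<xi>, Y s) (t, Y t) < d" .
      from d(2)[OF _ this] xiT have "dist (G \<xi> (Y s)) (G t (Y t)) < e" by auto
      then show ?case using As by simp
    qed
  qed
  have "((\<lambda>s. A s + B s) \<longlongrightarrow> G t (Y t) + gx * Y') (at t within ?T)"
    by (rule tendsto_add[OF limA limB])
  moreover have "A s + B s = (g s (Y s) - g t (Y t)) / (s - t)" for s
    unfolding A_def B_def by (simp add: add_divide_distrib[symmetric])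
  ultimately show ?thesis unfolding has_field_derivative_iff by simp
qed

lemma deriv_Tint:
  fixes f f' :: "real \<Rightarrow> real \<Rightarrow> real"
  assumes t: "t \<in> {0..1}"
    and fd: "\<And>s x. s \<in> {0..1} \<Longrightarrow> ((\<lambda>s. f s x) has_real_derivative f' s x) (at s within {0..1})"
    and fc: "\<And>s. s \<in> {0..1} \<Longrightarrow> continuous_on UNIV (f s)"
    and fb: "\<And>s x. s \<in> {0..1} \<Longrightarrow> \<bar>f s x\<bar> \<le> C"
    and f'b: "\<And>s x. s \<in> {0..1} \<Longrightarrow> \<bar>f' s x\<bar> \<le> B"
  shows "((\<lambda>s. Tint (f s)) has_real_derivative Tint (f' t)) (at t within {0..1})"
  unfolding has_field_derivative_iff tendsto_at_iff_sequentially
proof (intro allI impI)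
  let ?T = "{0..1::real}"
  fix S :: "nat \<Rightarrow> real" assume S: "\<forall>i. S i \<in> ?T - {t}" "S \<longlonglongrightarrow> t"
  define q where "q n x = (f (S n) x - f t x) / (S n - t)" for n x
  have int: "integrable Tmeas (f s)" if "s \<in> ?T" for s
    using fc[OF that] fb[OF that] by (rule integrable_cont_bdd)
  have eq: "((\<lambda>s. (Tint (f s) - Tint (f t)) / (s - t)) \<circ> S) n = integral\<^sup>L Tmeas (q n)" for n
  proof -
    have "integral\<^sup>L Tmeas (q n) = integral\<^sup>L Tmeas (\<lambda>x. f (S n) x - f t x) / (S n - t)"
      unfolding q_def by (rule integral_divide_zero)
    also have "\<dots> = (Tint (f (S n)) - Tint (f t)) / (S n - t)"
    proof -
      have "S n \<in> ?T" using S(1) by auto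
      then show ?thesis unfolding Tint_def using int[of "S n"] int[OF t] by simp
    qed
    finally show ?thesis by simp
  qed
  have lim: "(\<lambda>n. q n x) \<longlonglongrightarrow> f' t x" for x
  proof -
    have "((\<lambda>s. (f s x - f t x) / (s - t)) \<longlongrightarrow> f' t x) (at t within ?T)"
      using fd[OF t, of x] unfolding has_field_derivative_iff .
    then show ?thesis unfolding tendsto_at_iff_sequentially q_def comp_def using S by blast
  qed
  have qm: "q n \<in> borel_measurable Tmeas" for n
  proof -
    have "S n \<in> ?T" "S n \<noteq> t" using S(1) by auto
    then have "continuous_on UNIV (\<lambda>x. (f (S n) x - f t x) / (S n - t))"
      using fc[of "S n"] fc[OF t] by (intro continuous_intros) auto
    then show ?thesis unfolding q_def by (rule meas_cont)
  qed
  have qb: "norm (q n x) \<le> B" for n x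
  proof -
    have Sn: "S n \<in> ?T" "S n \<noteq> t" using S(1) by auto
    have "\<bar>f (S n) x - f t x\<bar> \<le> B * \<bar>S n - t\<bar>"
      by (rule lip_S[where S="?T" and f'="\<lambda>s. f' s x"]) (use fd f'b Sn t in auto)
    then show ?thesis using Sn unfolding q_def by (simp add: abs_divide divide_le_eq)
  qed
  have "(\<lambda>n. integral\<^sup>L Tmeas (q n)) \<longlonglongrightarrow> integral\<^sup>L Tmeas (f' t)"
  proof (rule integral_dominated_convergence[where w="\<lambda>_. B"])
    show "f' t \<in> borel_measurable Tmeas"
      by (rule borel_measurable_LIMSEQ_real[OF lim qm])
    show "q n \<in> borel_measurable Tmeas" for n by (rule qm)
    show "integrable Tmeas (\<lambda>_. B)" by simp
    show "AE x in Tmeas. (\<lambda>n. q n x) \<longlonglongrightarrow> f' t x" using lim by simp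
    show "AE x in Tmeas. norm (q n x) \<le> B" for n using qb by simp
  qed
  then show "((\<lambda>s. (Tint (f s) - Tint (f t)) / (s - t)) \<circ> S) \<longlonglongrightarrow> Tint (f' t)"
    using eq[unfolded Tint_def] by (simp add: comp_def Tint_def)
qed

lemma partial_x:
  fixes F :: "real \<times> real \<Rightarrow> real"
  assumes d: "\<forall>p\<in>{0..1} \<times> UNIV. (F has_derivative (\<lambda>h. A p * fst h + Bp p * snd h)) (at p within {0..1} \<times> UNIV)"
    and t: "t \<in> {0..1}"
  shows "((\<lambda>x. F (t, x)) has_real_derivative Bp (t, x)) (at x)"
proof -
  have "((\<lambda>x. F (t, x)) has_derivative (\<lambda>y. A (t, x) * fst (0::real, y) + Bp (t, x) * snd (0::real, y))) (at x within UNIV)"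
    by (rule has_derivative_in_compose2[where t="{0..1} \<times> UNIV" and g=F and f="\<lambda>x. (t, x)"])
       (use d t in \<open>auto intro!: derivative_eq_intros\<close>)
  then show ?thesis by (simp add: has_field_derivative_def)
qed

lemma deriv_periodic:
  assumes p: "periodic2pi f" and d: "\<And>x. (f has_real_derivative f' x) (at x)"
  shows "periodic2pi f'"
  unfolding periodic2pi_def
proof
  fix x
  have "((\<lambda>x. f (x + 2*pi)) has_real_derivative f' (x + 2*pi)) (at x)"
  proof -
    have "((\<lambda>x. x + 2*pi) has_real_derivative 1) (at x)" by (auto intro!: derivative_eq_intros)
    from DERIV_chain2[OF d this] show ?thesis by simp
  qed
  moreover have "(\<lambda>x. f (x + 2*pi)) = f" using p unfolding periodic2pi_def by auto
  ultimately show "f' (x + 2*pi) = f' x" using d[of x] DERIV_unique by metis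
qed

lemma bdd_periodic2:
  fixes H :: "real \<Rightarrow> real \<Rightarrow> real"
  assumes c: "continuous_on ({0..1} \<times> UNIV) (\<lambda>(t, x). H t x)"
    and p: "\<And>t. t \<in> {0..1} \<Longrightarrow> periodic2pi (H t)"
  shows "\<exists>M. \<forall>t\<in>{0..1}. \<forall>x. \<bar>H t x\<bar> \<le> M"
proof -
  have "compact ((\<lambda>(t, x). H t x) ` ({0..1} \<times> {0..2*pi}))"
    by (rule compact_continuous_image[OF continuous_on_subset[OF c]]) (auto intro: compact_Times)
  then obtain M where M: "\<And>z. z \<in> (\<lambda>(t, x). H t x) ` ({0..1} \<times> {0..2*pi}) \<Longrightarrow> norm z \<le> M"
    using compact_imp_bounded bounded_iff by metis
  show ?thesis
  proof (intro exI ballI allI)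
    fix t x assume t: "t \<in> {0..1::real}"
    have "H t x = H t (tmod x)" using tmod_periodic[OF p[OF t]] by simp
    moreover have "(t, tmod x) \<in> {0..1} \<times> {0..2*pi}" using t tmod_range[of x] by auto
    ultimately show "\<bar>H t x\<bar> \<le> M" using M by force
  qed
qed

lemma bdd_periodic1:
  fixes h :: "real \<Rightarrow> real"
  assumes c: "continuous_on UNIV h" and p: "periodic2pi h"
  shows "\<exists>M. \<forall>x. \<bar>h x\<bar> \<le> M"
proof -
  have e: "(\<lambda>(t::real, x). h x) = h \<circ> snd" by auto
  have "continuous_on ({0..1} \<times> UNIV) (\<lambda>(t::real, x). h x)"
    unfolding e by (rule continuous_on_compose[OF continuous_on_snd continuous_on_subset[OF c]]) auto
  then obtain M where "\<forall>t\<in>{0..1::real}. \<forall>x. \<bar>h x\<bar> \<le> M"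
    using bdd_periodic2[of "\<lambda>t. h"] p by auto
  then show ?thesis by auto
qed

lemma min_periodic:
  fixes h :: "real \<Rightarrow> real"
  assumes c: "continuous_on UNIV h" and p: "periodic2pi h"
  shows "\<exists>x0. \<forall>x. h x0 \<le> h x"
proof -
  have "\<exists>x0\<in>{0..2*pi}. \<forall>y\<in>{0..2*pi}. h x0 \<le> h y"
    by (rule continuous_attains_inf) (auto intro: continuous_on_subset[OF c])
  then obtain x0 where x0: "x0 \<in> {0..2*pi}" "\<And>y. y \<in> {0..2*pi} \<Longrightarrow> h x0 \<le> h y"
    by blast
  show ?thesis
  proof (intro exI allI)
    fix x
    have "h x = h (tmod x)" using tmod_periodic[OF p] by simp
    then show "h x0 \<le> h x" using x0(2)[of "tmod x"] tmod_range[of x] by auto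
  qed
qed

lemma max_periodic:
  fixes h :: "real \<Rightarrow> real"
  assumes c: "continuous_on UNIV h" and p: "periodic2pi h"
  shows "\<exists>x0. \<forall>x. h x \<le> h x0"
proof -
  have "\<exists>x0. \<forall>x. - h x0 \<le> - h x"
    by (rule min_periodic) (use c p in \<open>auto intro: continuous_intros simp: periodic2pi_def\<close>)
  then show ?thesis by auto
qed

lemma integral_pos:
  fixes H :: "real \<Rightarrow> real"
  assumes c: "continuous_on UNIV H" and nn: "\<And>x. H x \<ge> 0" and a: "a < b" and x: "x \<in> {a..b}" and pos: "H x > 0"
  shows "integral {a..b} H > 0"
proof -
  have i: "H integrable_on {a..b}" by (rule integrable_continuous_interval) (rule continuous_on_subset[OF c], auto)
  have "integral {a..b} H \<ge> 0" using nn by (intro integral_nonneg[OF i]) auto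
  moreover have "integral {a..b} H \<noteq> 0"
  proof
    assume "integral {a..b} H = 0"
    then have "(H has_integral 0) (cbox a b)" using i by (metis has_integral_integral cbox_interval)
    then have "H x = 0"
      by (intro has_integral_0_cbox_imp_0[of a b H x]) (use a x nn in \<open>auto intro: continuous_on_subset[OF c]\<close>)
    then show False using pos by simp
  qed
  ultimately show ?thesis by simp
qed

locale setting =
  fixes \<rho> :: "real \<Rightarrow> real"
    and \<phi> :: "real \<Rightarrow> real \<Rightarrow> real"
    and X :: "real \<Rightarrow> real \<Rightarrow> real"
    and \<rho>t :: "real \<Rightarrow> real \<Rightarrow> real"
    and g :: "real \<Rightarrow> real \<Rightarrow> real"
  assumes rho_smooth: "smooth1 \<rho>" and rho_per: "periodic2pi \<rho>"
    and rho_pos: "\<And>x. \<rho> x > 0" and rho_prob: "Tint \<rho> = 1"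
    and phi_smooth: "smooth2 ({0..1} \<times> UNIV) (\<lambda>(t, x). \<phi> t x)"
    and phi_per: "\<And>t. t \<in> {0..1} \<Longrightarrow> periodic2pi (\<phi> t)"
    and X0: "\<And>x. X 0 x = x"
    and X_flow: "\<And>t x. t \<in> {0..1} \<Longrightarrow>
        ((\<lambda>s. X s x) has_real_derivative deriv (\<phi> t) (X t x)) (at t within {0..1})"
    and rhot_cont: "\<And>t. t \<in> {0..1} \<Longrightarrow> continuous_on UNIV (\<rho>t t)"
    and rhot_per: "\<And>t. t \<in> {0..1} \<Longrightarrow> periodic2pi (\<rho>t t)"
    and rhot_nonneg: "\<And>t x. t \<in> {0..1} \<Longrightarrow> \<rho>t t x \<ge> 0"
    and rhot_push: "\<And>t. t \<in> {0..1} \<Longrightarrow>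
        distr (density Tmeas (\<lambda>x. ennreal (\<rho> x))) Tmeas (\<lambda>x. tmod (X t x))
          = density Tmeas (\<lambda>y. ennreal (\<rho>t t y))"
    and g_C2: "\<And>t. t \<in> {0..1} \<Longrightarrow> Cn 2 (g t)"
    and g_per: "\<And>t. t \<in> {0..1} \<Longrightarrow> periodic2pi (g t)"
    and g_C1t: "\<exists>G. continuous_on ({0..1} \<times> UNIV) (\<lambda>(t, x). G t x) \<and>
        (\<forall>t\<in>{0..1}. \<forall>x. ((\<lambda>s. g s x) has_real_derivative G t x) (at t within {0..1}))"
    and g_mean: "\<And>t. t \<in> {0..1} \<Longrightarrow> Tint (g t) = 0"
    and g_eq: "\<And>t x. t \<in> {0..1} \<Longrightarrow>
        ((\<lambda>s. g s x) has_real_derivative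
           (- deriv (g t) x * deriv (\<phi> t) x
            + Tint (\<lambda>y. deriv (g t) y * deriv (\<phi> t) y)
              * (1 / (Tint (\<lambda>y. 1 / \<rho>t t y) * \<rho>t t x))))
         (at t within {0..1})"
begin

abbreviation "T \<equiv> {0..1::real}"

lemma phi_derivs: "\<exists>px pxx. (\<forall>t\<in>T. \<forall>x. (\<phi> t has_real_derivative px t x) (at x))
   \<and> (\<forall>t\<in>T. \<forall>x. (px t has_real_derivative pxx t x) (at x))
   \<and> continuous_on (T \<times> UNIV) (\<lambda>(t, x). pxx t x)"
proof -
  have "Ck2 2 (T \<times> UNIV) (\<lambda>(t, x). \<phi> t x)" using phi_smooth unfolding smooth2_def by blast
  then obtain D1 D2 where D: "\<forall>p\<in>T \<times> UNIV. ((\<lambda>(t, x). \<phi> t x) has_derivative (\<lambda>h. D1 p * fst h + D2 p * snd h)) (at p within T \<times> UNIV)"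
      "Ck2 1 (T \<times> UNIV) D2"
    by (auto simp: numeral_2_eq_2)
  then obtain E1 E2 where E: "\<forall>p\<in>T \<times> UNIV. (D2 has_derivative (\<lambda>h. E1 p * fst h + E2 p * snd h)) (at p within T \<times> UNIV)"
      "continuous_on (T \<times> UNIV) E2"
    by auto
  show ?thesis
  proof (intro exI conjI)
    show "\<forall>t\<in>T. \<forall>x. (\<phi> t has_real_derivative D2 (t, x)) (at x)"
      using partial_x[OF D(1)] by simp
    show "\<forall>t\<in>T. \<forall>x. ((\<lambda>x. D2 (t, x)) has_real_derivative E2 (t, x)) (at x)"
      using partial_x[OF E(1)] by simp
    show "continuous_on (T \<times> UNIV) (\<lambda>(t, x). E2 (t, x))" using E(2) by simp
  qed
qed

end

locale setting2 = setting +
  fixes px pxx G :: "real \<Rightarrow> real \<Rightarrow> real"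
  assumes px: "\<And>t x. t \<in> {0..1} \<Longrightarrow> (\<phi> t has_real_derivative px t x) (at x)"
    and pxx: "\<And>t x. t \<in> {0..1} \<Longrightarrow> (px t has_real_derivative pxx t x) (at x)"
    and pxxc: "continuous_on ({0..1} \<times> UNIV) (\<lambda>(t, x). pxx t x)"
    and Gc: "continuous_on ({0..1} \<times> UNIV) (\<lambda>(t, x). G t x)"
    and Gd: "\<And>t x. t \<in> {0..1} \<Longrightarrow> ((\<lambda>s. g s x) has_real_derivative G t x) (at t within {0..1})"
begin

lemma deriv_phi: "t \<in> T \<Longrightarrow> deriv (\<phi> t) x = px t x"
  using px by (simp add: DERIV_imp_deriv)

lemma px_per: "t \<in> T \<Longrightarrow> periodic2pi (px t)"
  using deriv_periodic[OF phi_per px] by auto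

lemma pxx_per: "t \<in> T \<Longrightarrow> periodic2pi (pxx t)"
  using deriv_periodic[OF px_per pxx] by auto

definition Lc where "Lc = (SOME L. L \<ge> 0 \<and> (\<forall>t\<in>T. \<forall>x. \<bar>pxx t x\<bar> \<le> L))"

lemma Lc: "Lc \<ge> 0" "t \<in> T \<Longrightarrow> \<bar>pxx t x\<bar> \<le> Lc"
proof -
  obtain M where "\<forall>t\<in>T. \<forall>x. \<bar>pxx t x\<bar> \<le> M" using bdd_periodic2[OF pxxc pxx_per] by blast
  then have "\<exists>L. L \<ge> 0 \<and> (\<forall>t\<in>T. \<forall>x. \<bar>pxx t x\<bar> \<le> L)"
    by (intro exI[of _ "max 0 M"]) (auto simp: le_max_iff_disj)
  from someI_ex[OF this] show "Lc \<ge> 0" "t \<in> T \<Longrightarrow> \<bar>pxx t x\<bar> \<le> Lc" unfolding Lc_def by auto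
qed

lemma px_lip: "t \<in> T \<Longrightarrow> \<bar>px t a - px t b\<bar> \<le> Lc * \<bar>a - b\<bar>"
  by (rule lip_S[where S=UNIV and f'="pxx t"]) (use pxx Lc in auto)

lemma X_deriv: "t \<in> T \<Longrightarrow> ((\<lambda>s. X s x) has_real_derivative px t (X t x)) (at t within T)"
  using X_flow[of t x] deriv_phi by simp

definition K where "K = exp Lc"

lemma K_ge1: "K \<ge> 1" unfolding K_def using Lc(1) by simp

lemma X_compare:
  assumes t: "t \<in> T"
  shows "\<bar>X t x - X t y\<bar> \<le> K * \<bar>x - y\<bar>" and "\<bar>x - y\<bar> \<le> K * \<bar>X t x - X t y\<bar>"
proof -
  have c: "(X t x - X t y)^2 \<le> exp (2*Lc*t) * (X 0 x - X 0 y)^2"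
     "exp (- (2*Lc*t)) * (X 0 x - X 0 y)^2 \<le> (X t x - X t y)^2"
    by (rule ode_compare[where V=px and L=Lc and ?Y1.0="\<lambda>s. X s x" and ?Y2.0="\<lambda>s. X s y"];
        use Lc(1) px_lip X_deriv t in auto)+
  have e: "exp (2*Lc*t) \<le> K^2" unfolding K_def using t Lc(1)
    by (simp add: exp_double[symmetric] mult_left_le)
  have "(X t x - X t y)^2 \<le> (K * \<bar>x - y\<bar>)^2"
  proof -
    have "(X t x - X t y)^2 \<le> exp (2*Lc*t) * (x - y)^2" using c(1) X0 by simp
    also have "\<dots> \<le> K^2 * (x - y)^2" using e by (intro mult_right_mono) auto
    finally show ?thesis by (simp add: power_mult_distrib)
  qed
  then show "\<bar>X t x - X t y\<bar> \<le> K * \<bar>x - y\<bar>"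
    using K_ge1 by (metis abs_le_square_iff abs_mult abs_abs abs_of_nonneg order_trans zero_le_one)
  have "(x - y)^2 \<le> (K * \<bar>X t x - X t y\<bar>)^2"
  proof -
    have "exp (- (2*Lc*t)) * (x - y)^2 \<le> (X t x - X t y)^2" using c(2) X0 by simp
    then have "exp (2*Lc*t) * (exp (- (2*Lc*t)) * (x - y)^2) \<le> exp (2*Lc*t) * (X t x - X t y)^2"
      by (intro mult_left_mono) auto
    then have "(x - y)^2 \<le> exp (2*Lc*t) * (X t x - X t y)^2"
      by (simp add: mult.assoc[symmetric] exp_add[symmetric])
    also have "\<dots> \<le> K^2 * (X t x - X t y)^2" using e by (intro mult_right_mono) auto
    finally show ?thesis by (simp add: power_mult_distrib)
  qed
  then show "\<bar>x - y\<bar> \<le> K * \<bar>X t x - X t y\<bar>"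
    using K_ge1 by (metis abs_le_square_iff abs_mult abs_abs abs_of_nonneg order_trans zero_le_one)
qed

end

context setting2 begin

lemma X_shift: assumes t: "t \<in> T" shows "X t (x + 2*pi) = X t x + 2*pi"
proof -
  have d1: "((\<lambda>s. X s (x + 2*pi) - 2*pi) has_real_derivative px s (X s (x + 2*pi) - 2*pi)) (at s within T)"
    if "s \<in> T" for s
  proof -
    have "px s (X s (x + 2*pi) - 2*pi) = px s ((X s (x + 2*pi) - 2*pi) + 2*pi)"
      using px_per[OF that] unfolding periodic2pi_def by metis
    then show ?thesis using X_deriv[OF that, of "x + 2*pi"] by (auto intro!: derivative_eq_intros)
  qed
  have "((X t (x + 2*pi) - 2*pi) - X t x)^2 \<le> exp (2*Lc*t) * ((X 0 (x + 2*pi) - 2*pi) - X 0 x)^2"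
    by (rule ode_compare(1)[where V=px and L=Lc and ?Y1.0="\<lambda>s. X s (x + 2*pi) - 2*pi" and ?Y2.0="\<lambda>s. X s x"])
       (use Lc(1) px_lip X_deriv t d1 in auto)
  then show ?thesis using X0 by simp
qed

lemma X_shift_nat: assumes t: "t \<in> T" shows "X t (x + 2*pi*real n) = X t x + 2*pi*real n"
proof (induction n)
  case (Suc n)
  have "X t (x + 2*pi*real (Suc n)) = X t ((x + 2*pi*real n) + 2*pi)" by (simp add: algebra_simps)
  also have "\<dots> = X t (x + 2*pi*real n) + 2*pi" by (rule X_shift[OF t])
  finally show ?case using Suc by (simp add: algebra_simps)
qed simp

lemma X_shift_int: assumes t: "t \<in> T" shows "X t (x + 2*pi * of_int k) = X t x + 2*pi * of_int k"
proof (cases "k \<ge> 0")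
  case True
  then show ?thesis using X_shift_nat[OF t, of x "nat k"] by simp
next
  case False
  have "X t ((x + 2*pi * of_int k) + 2*pi*real (nat (-k))) = X t (x + 2*pi * of_int k) + 2*pi*real (nat (-k))"
    by (rule X_shift_nat[OF t])
  moreover have "(x + 2*pi * of_int k) + 2*pi*real (nat (-k)) = x" using False by simp
  ultimately show ?thesis using False by simp
qed

lemma X_cont: assumes t: "t \<in> T" shows "continuous_on UNIV (X t)"
  unfolding continuous_on_iff
proof (intro ballI allI impI)
  fix x e :: real assume e: "e > 0"
  show "\<exists>d>0. \<forall>x'\<in>UNIV. dist x' x < d \<longrightarrow> dist (X t x') (X t x) < e"
  proof (intro exI[of _ "e / K"] conjI ballI impI)
    show "e / K > 0" using e K_ge1 by simp
    fix x' assume "dist x' x < e / K"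
    then have "K * \<bar>x' - x\<bar> < e" using K_ge1 by (simp add: dist_real_def field_simps)
    then show "dist (X t x') (X t x) < e" using X_compare(1)[OF t, of x' x] by (simp add: dist_real_def)
  qed
qed

lemma X_surj: assumes t: "t \<in> T" shows "\<exists>x. X t x = y"
proof -
  define k where "k = \<lfloor>(y - X t 0) / (2*pi)\<rfloor>"
  have k1: "2*pi * of_int k \<le> y - X t 0"
  proof -
    have "of_int k \<le> (y - X t 0) / (2*pi)" unfolding k_def by linarith
    then show ?thesis by (simp add: field_simps)
  qed
  have k2: "y - X t 0 \<le> 2*pi * of_int (k + 1)"
  proof -
    have "(y - X t 0) / (2*pi) \<le> of_int (k + 1)" unfolding k_def by linarith
    then show ?thesis by (simp add: field_simps)
  qed
  have a: "X t (2*pi * of_int k) = X t 0 + 2*pi * of_int k" using X_shift_int[OF t, of 0 k] by simp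
  have b: "X t (2*pi * of_int (k+1)) = X t 0 + 2*pi * of_int (k+1)" using X_shift_int[OF t, of 0 "k+1"] by simp
  have "\<exists>x. 2*pi * of_int k \<le> x \<and> x \<le> 2*pi * of_int (k+1) \<and> X t x = y"
    by (rule IVT') (use a b k1 k2 continuous_on_subset[OF X_cont[OF t]] in auto)
  then show ?thesis by blast
qed

lemma rho_cont: "continuous_on UNIV \<rho>"
  using rho_smooth unfolding smooth1_def Cn_def by (metis funpow_0)

lemma push:
  assumes t: "t \<in> T" and hc: "continuous_on UNIV h" and hp: "periodic2pi h"
  shows "Tint (\<lambda>x. h (X t x) * \<rho> x) = Tint (\<lambda>y. h y * \<rho>t t y)"
proof -
  have hm: "h \<in> borel_measurable borel" using hc by (rule borel_measurable_continuous_onI)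
  have hT: "h \<in> borel_measurable Tmeas" using hc by (rule meas_cont)
  have Xm: "X t \<in> borel_measurable borel" using X_cont[OF t] by (rule borel_measurable_continuous_onI)
  have rT: "\<rho> \<in> borel_measurable Tmeas" using rho_cont by (rule meas_cont)
  have rtT: "\<rho>t t \<in> borel_measurable Tmeas" using rhot_cont[OF t] by (rule meas_cont)
  have tX: "(\<lambda>x. tmod (X t x)) \<in> borel_measurable borel" by (rule measurable_compose[OF Xm tmod_measurable])
  have fm: "(\<lambda>x. tmod (X t x)) \<in> measurable (density Tmeas (\<lambda>x. ennreal (\<rho> x))) Tmeas"
    using tX measurable_cong_sets[of "density Tmeas (\<lambda>x. ennreal (\<rho> x))" borel Tmeas borel] by simp
  have hX: "(\<lambda>x. h (tmod (X t x))) \<in> borel_measurable Tmeas"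
    using measurable_compose[OF tX hm] measurable_cong_sets[of Tmeas borel borel borel] by simp
  have "integral\<^sup>L (distr (density Tmeas (\<lambda>x. ennreal (\<rho> x))) Tmeas (\<lambda>x. tmod (X t x))) h
      = integral\<^sup>L (density Tmeas (\<lambda>x. ennreal (\<rho> x))) (\<lambda>x. h (tmod (X t x)))"
    by (rule integral_distr[OF fm hT])
  also have "\<dots> = integral\<^sup>L Tmeas (\<lambda>x. \<rho> x *\<^sub>R h (tmod (X t x)))"
    by (rule integral_density[OF hX rT]) (use rho_pos in \<open>simp add: less_imp_le\<close>)
  also have "\<dots> = Tint (\<lambda>x. h (X t x) * \<rho> x)"
    unfolding Tint_def using tmod_periodic[OF hp] by (simp add: mult.commute)
  finally have 1: "integral\<^sup>L (distr (density Tmeas (\<lambda>x. ennreal (\<rho> x))) Tmeas (\<lambda>x. tmod (X t x))) h = Tint (\<lambda>x. h (X t x) * \<rho> x)" .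
  have "integral\<^sup>L (density Tmeas (\<lambda>y. ennreal (\<rho>t t y))) h = integral\<^sup>L Tmeas (\<lambda>y. \<rho>t t y *\<^sub>R h y)"
    by (rule integral_density[OF hT rtT]) (use rhot_nonneg[OF t] in simp)
  also have "\<dots> = Tint (\<lambda>y. h y * \<rho>t t y)" unfolding Tint_def by (simp add: mult.commute)
  finally show ?thesis using 1 rhot_push[OF t] by simp
qed

end

lemma cont_int: "continuous_on UNIV (f::real \<Rightarrow> real) \<Longrightarrow> f integrable_on {a..b}"
  by (rule integrable_continuous_interval) (rule continuous_on_subset, auto)

lemma cos_le_circ:
  fixes \<theta> \<delta> :: real
  assumes "0 \<le> \<delta>" "\<delta> \<le> pi" "\<And>k::int. \<delta> \<le> \<bar>\<theta> - 2*pi * of_int k\<bar>"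
  shows "cos \<theta> \<le> cos \<delta>"
proof -
  define k where "k = \<lfloor>(\<theta> + pi) / (2*pi)\<rfloor>"
  define \<theta>' where "\<theta>' = \<theta> - 2*pi * of_int k"
  have "of_int k \<le> (\<theta> + pi) / (2*pi)" "(\<theta> + pi) / (2*pi) < of_int k + 1" unfolding k_def by linarith+
  then have "2*pi * of_int k \<le> \<theta> + pi" "\<theta> + pi < 2*pi * (of_int k + 1)" by (simp_all add: field_simps)
  then have r: "\<bar>\<theta>'\<bar> \<le> pi" unfolding \<theta>'_def by (auto simp: algebra_simps)
  have cper: "periodic2pi cos" unfolding periodic2pi_def by simp
  have "cos \<theta> = cos (\<theta>' + 2*pi * of_int k)" unfolding \<theta>'_def by simp
  also have "\<dots> = cos \<theta>'" by (rule periodic_int[OF cper])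
  also have "\<dots> = cos \<bar>\<theta>'\<bar>" by simp
  also have "\<dots> \<le> cos \<delta>" using assms(3)[of k] r assms(1) unfolding \<theta>'_def
    by (intro cos_monotone_0_pi_le) auto
  finally show ?thesis .
qed

lemma circ_dist:
  fixes z :: real
  assumes "\<bar>z\<bar> \<le> pi"
  shows "\<bar>z\<bar> \<le> \<bar>z - 2*pi * of_int k\<bar>"
proof (cases "k = 0")
  case False
  then have "\<bar>of_int k :: real\<bar> \<ge> 1" by linarith
  then have "2*pi \<le> \<bar>2*pi * of_int k\<bar>" by (simp add: abs_mult)
  then show ?thesis using assms by linarith
qed simp

definition bump :: "real \<Rightarrow> real \<Rightarrow> real" where
  "bump r \<theta> = max 0 (cos \<theta> - cos r)"

lemma bump_cont: "continuous_on UNIV (bump r)"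
  unfolding bump_def by (intro continuous_intros)

lemma bump_nn: "bump r \<theta> \<ge> 0" unfolding bump_def by simp

lemma bump_per: "periodic2pi (\<lambda>y. bump r (y - y0))"
  unfolding periodic2pi_def bump_def
  by (metis (no_types, opaque_lifting) add_diff_eq cos_periodic diff_add_eq)

lemma bump_supp: "\<bar>\<theta>\<bar> \<le> pi \<Longrightarrow> bump r \<theta> > 0 \<Longrightarrow> 0 \<le> r \<Longrightarrow> \<bar>\<theta>\<bar> < r"
proof (rule ccontr)
  assume a: "\<bar>\<theta>\<bar> \<le> pi" "bump r \<theta> > 0" "0 \<le> r" "\<not> \<bar>\<theta>\<bar> < r"
  then have "cos \<bar>\<theta>\<bar> \<le> cos r" by (intro cos_monotone_0_pi_le) auto
  then show False using a(2) by (simp add: bump_def)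
qed

lemma bump_mono: "cos \<alpha> \<le> cos \<beta> \<Longrightarrow> bump r \<alpha> \<le> bump r \<beta>"
  unfolding bump_def by simp

lemma bump_int_pos: assumes "0 < r" "r \<le> pi" shows "integral {-pi..pi} (bump r) > 0"
proof (rule integral_pos[OF bump_cont bump_nn])
  show "-pi < pi" by simp
  show "0 \<in> {-pi..pi}" by simp
  have "cos r < cos 0" using assms by (intro cos_monotone_0_pi) auto
  then show "bump r 0 > 0" by (simp add: bump_def)
qed

lemma bump_shift: "integral {y0 - pi..y0 + pi} (\<lambda>y. bump r (y - y0)) = integral {-pi..pi} (bump r)"
  using affine_subst[OF bump_cont, of 1 pi y0 r] by simp

context setting2 begin

definition mr where "mr = (SOME m. m > 0 \<and> (\<forall>x. m \<le> \<rho> x))"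
definition Mr where "Mr = (SOME M. \<forall>x. \<rho> x \<le> M)"

lemma mr: "mr > 0" "mr \<le> \<rho> x"
proof -
  obtain x0 where "\<forall>x. \<rho> x0 \<le> \<rho> x" using min_periodic[OF rho_cont rho_per] by blast
  then have "\<exists>m. m > 0 \<and> (\<forall>x. m \<le> \<rho> x)" using rho_pos by blast
  from someI_ex[OF this] show "mr > 0" "mr \<le> \<rho> x" unfolding mr_def by auto
qed

lemma Mr: "\<rho> x \<le> Mr"
proof -
  obtain x0 where "\<forall>x. \<rho> x \<le> \<rho> x0" using max_periodic[OF rho_cont rho_per] by blast
  then have "\<exists>M. \<forall>x. \<rho> x \<le> M" by blast
  from someI_ex[OF this] show ?thesis unfolding Mr_def by auto
qed

lemma window_eq:
  assumes t: "t \<in> T" and r: "0 \<le> r" and x0: "X t x0 = y0"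
  defines "h \<equiv> \<lambda>y. bump r (y - y0)"
  shows "integral {x0 - pi..x0 + pi} (\<lambda>x. h (X t x) * \<rho> x) = integral {y0 - pi..y0 + pi} (\<lambda>y. h y * \<rho>t t y)"
proof -
  have hc: "continuous_on UNIV h" unfolding h_def
    by (rule continuous_on_compose2[OF bump_cont]) (auto intro: continuous_intros)
  have hp: "periodic2pi h" unfolding h_def by (rule bump_per)
  have c1: "continuous_on UNIV (\<lambda>x. h (X t x) * \<rho> x)"
    by (intro continuous_intros continuous_on_compose2[OF hc X_cont[OF t]] rho_cont) auto
  have p1: "periodic2pi (\<lambda>x. h (X t x) * \<rho> x)"
    using hp rho_per X_shift[OF t] unfolding periodic2pi_def by simp
  have c2: "continuous_on UNIV (\<lambda>y. h y * \<rho>t t y)"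
    by (intro continuous_intros hc rhot_cont[OF t])
  have p2: "periodic2pi (\<lambda>y. h y * \<rho>t t y)"
    using hp rhot_per[OF t] unfolding periodic2pi_def by simp
  have "Tint (\<lambda>x. h (X t x) * \<rho> x) = Tint (\<lambda>y. h y * \<rho>t t y)" by (rule push[OF t hc hp])
  moreover have "Tint (\<lambda>x. h (X t x) * \<rho> x) = integral {x0 - pi..x0 - pi + 2*pi} (\<lambda>x. h (X t x) * \<rho> x) / (2*pi)"
    by (rule Tint_window[OF c1 p1])
  moreover have "Tint (\<lambda>y. h y * \<rho>t t y) = integral {y0 - pi..y0 - pi + 2*pi} (\<lambda>y. h y * \<rho>t t y) / (2*pi)"
    by (rule Tint_window[OF c2 p2])
  ultimately show ?thesis by (simp add: algebra_simps)
qed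

end

context setting2 begin

lemma rhot_lower: assumes t: "t \<in> T" shows "mr / K \<le> \<rho>t t y0"
proof (rule ccontr)
  assume "\<not> mr / K \<le> \<rho>t t y0"
  then have lt: "\<rho>t t y0 < mr / K" by simp
  define c where "c = (\<rho>t t y0 + mr / K) / 2"
  have avg: "\<And>a b::real. a < b \<Longrightarrow> a < (a+b)/2 \<and> (a+b)/2 < b" by (auto simp: field_simps)
  have c: "\<rho>t t y0 < c" "c < mr / K" unfolding c_def using avg[OF lt] by auto
  obtain d where d: "d > 0" "\<And>y. dist y y0 < d \<Longrightarrow> dist (\<rho>t t y) (\<rho>t t y0) < c - \<rho>t t y0"
    using rhot_cont[OF t] c(1) unfolding continuous_on_iff by (metis UNIV_I diff_gt_0_iff_gt)
  define r where "r = min d pi"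
  have r: "0 < r" "r \<le> pi" "r \<le> d" using d(1) by (auto simp: r_def)
  obtain x0 where x0: "X t x0 = y0" using X_surj[OF t] by blast
  define h where "h = (\<lambda>y. bump r (y - y0))"
  define I where "I = integral {-pi..pi} (bump r)"
  have Ipos: "I > 0" unfolding I_def by (rule bump_int_pos[OF r(1,2)])
  have hc: "continuous_on UNIV h" unfolding h_def
    by (rule continuous_on_compose2[OF bump_cont]) (auto intro: continuous_intros)
  have hXc: "continuous_on UNIV (\<lambda>x. h (X t x))"
    by (rule continuous_on_compose2[OF hc X_cont[OF t]]) auto
  have hnn: "h y \<ge> 0" for y unfolding h_def by (rule bump_nn)
  have K: "K \<ge> 1" by (rule K_ge1)
  have "integral {y0 - pi..y0 + pi} (\<lambda>y. h y * \<rho>t t y) \<le> integral {y0 - pi..y0 + pi} (\<lambda>y. c * h y)"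
  proof (rule integral_le)
    show "(\<lambda>y. h y * \<rho>t t y) integrable_on {y0 - pi..y0 + pi}"
      by (rule cont_int) (intro continuous_intros hc rhot_cont[OF t])
    show "(\<lambda>y. c * h y) integrable_on {y0 - pi..y0 + pi}"
      by (rule cont_int) (intro continuous_intros hc)
    fix y assume y: "y \<in> {y0 - pi..y0 + pi}"
    show "h y * \<rho>t t y \<le> c * h y"
    proof (cases "h y = 0")
      case False
      then have hp: "h y > 0" using hnn[of y] by simp
      have "\<bar>y - y0\<bar> < r" using bump_supp[of "y - y0" r] y hp r unfolding h_def by auto
      then have "dist y y0 < d" using r by (simp add: dist_real_def)
      then have "\<rho>t t y < c" using d(2)[of y] by (simp add: dist_real_def)
      then show ?thesis using hp by (simp add: mult.commute)
    qed simp
  qed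
  also have "\<dots> = c * I"
    using integral_mult[OF cont_int[OF hc], of c "y0 - pi" "y0 + pi"] bump_shift[of y0 r]
    unfolding I_def h_def by simp
  finally have R: "integral {y0 - pi..y0 + pi} (\<lambda>y. h y * \<rho>t t y) \<le> c * I" .
  have "mr * (I / K) = mr * integral {x0 - pi/K..x0 + pi/K} (\<lambda>x. bump r (K * (x - x0)))"
    using affine_subst[OF bump_cont, of K pi x0 r] K unfolding I_def by simp
  also have "\<dots> \<le> mr * integral {x0 - pi/K..x0 + pi/K} (\<lambda>x. h (X t x))"
  proof (intro mult_left_mono integral_le)
    show "(\<lambda>x. bump r (K * (x - x0))) integrable_on {x0 - pi/K..x0 + pi/K}"
      by (rule cont_int) (rule continuous_on_compose2[OF bump_cont], auto intro!: continuous_intros)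
    show "(\<lambda>x. h (X t x)) integrable_on {x0 - pi/K..x0 + pi/K}" by (rule cont_int[OF hXc])
    show "0 \<le> mr" using mr(1) by simp
    fix x assume x: "x \<in> {x0 - pi/K..x0 + pi/K}"
    have "\<bar>x - x0\<bar> \<le> pi / K" using x by auto
    then have kx: "K * \<bar>x - x0\<bar> \<le> pi" using K by (simp add: field_simps)
    have "\<bar>X t x - y0\<bar> \<le> K * \<bar>x - x0\<bar>" using X_compare(1)[OF t, of x x0] x0 by simp
    then have "cos (K * \<bar>x - x0\<bar>) \<le> cos \<bar>X t x - y0\<bar>"
      using kx by (intro cos_monotone_0_pi_le) auto
    then have "cos (K * (x - x0)) \<le> cos (X t x - y0)"
      using K by (metis abs_mult abs_of_nonneg cos_abs_real order_trans zero_le_one)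
    then show "bump r (K * (x - x0)) \<le> h (X t x)" unfolding h_def by (rule bump_mono)
  qed
  also have "\<dots> \<le> mr * integral {x0 - pi..x0 + pi} (\<lambda>x. h (X t x))"
  proof (intro mult_left_mono integral_subset_le)
    have "pi / K \<le> pi" using K by (simp add: divide_le_eq)
    then show "{x0 - pi/K..x0 + pi/K} \<subseteq> {x0 - pi..x0 + pi}" by auto
  qed (use cont_int[OF hXc] hnn mr(1) in auto)
  also have "\<dots> = integral {x0 - pi..x0 + pi} (\<lambda>x. mr * h (X t x))"
    by (rule integral_mult[OF cont_int[OF hXc]])
  also have "\<dots> \<le> integral {x0 - pi..x0 + pi} (\<lambda>x. h (X t x) * \<rho> x)"
  proof (rule integral_le)
    show "(\<lambda>x. mr * h (X t x)) integrable_on {x0 - pi..x0 + pi}"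
      by (rule cont_int) (intro continuous_intros hXc)
    show "(\<lambda>x. h (X t x) * \<rho> x) integrable_on {x0 - pi..x0 + pi}"
      by (rule cont_int) (intro continuous_intros hXc rho_cont)
    fix x show "mr * h (X t x) \<le> h (X t x) * \<rho> x"
      using mr(2)[of x] hnn[of "X t x"] by (simp add: mult.commute mult_right_mono)
  qed
  also have "\<dots> = integral {y0 - pi..y0 + pi} (\<lambda>y. h y * \<rho>t t y)"
    unfolding h_def by (rule window_eq[OF t _ x0]) (use r in auto)
  finally have "mr * (I / K) \<le> c * I" using R by linarith
  moreover have "mr * (I / K) = (mr / K) * I" by simp
  ultimately have "(mr / K) * I \<le> c * I" by simp
  then have "mr / K \<le> c" using Ipos mult_le_cancel_right_pos by blast
  then show False using c(2) by simp
qed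

end

context setting2 begin

lemma rhot_upper: assumes t: "t \<in> T" shows "\<rho>t t y0 \<le> Mr * K"
proof (rule ccontr)
  assume "\<not> \<rho>t t y0 \<le> Mr * K"
  then have lt: "Mr * K < \<rho>t t y0" by simp
  define c where "c = (Mr * K + \<rho>t t y0) / 2"
  have avg: "\<And>a b::real. a < b \<Longrightarrow> a < (a+b)/2 \<and> (a+b)/2 < b" by (auto simp: field_simps)
  have c: "Mr * K < c" "c < \<rho>t t y0" unfolding c_def using avg[OF lt] by auto
  obtain d where d: "d > 0" "\<And>y. dist y y0 < d \<Longrightarrow> dist (\<rho>t t y) (\<rho>t t y0) < \<rho>t t y0 - c"
    using rhot_cont[OF t] c(2) unfolding continuous_on_iff by (metis UNIV_I diff_gt_0_iff_gt)
  define r where "r = min d pi"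
  have r: "0 < r" "r \<le> pi" "r \<le> d" using d(1) by (auto simp: r_def)
  obtain x0 where x0: "X t x0 = y0" using X_surj[OF t] by blast
  define h where "h = (\<lambda>y. bump r (y - y0))"
  define I where "I = integral {-pi..pi} (bump r)"
  have Ipos: "I > 0" unfolding I_def by (rule bump_int_pos[OF r(1,2)])
  have hc: "continuous_on UNIV h" unfolding h_def
    by (rule continuous_on_compose2[OF bump_cont]) (auto intro: continuous_intros)
  have hXc: "continuous_on UNIV (\<lambda>x. h (X t x))"
    by (rule continuous_on_compose2[OF hc X_cont[OF t]]) auto
  have hnn: "h y \<ge> 0" for y unfolding h_def by (rule bump_nn)
  have K: "K \<ge> 1" by (rule K_ge1)
  have Mr0: "Mr \<ge> 0" using Mr[of 0] rho_pos[of 0] by simp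
  have "c * I = integral {y0 - pi..y0 + pi} (\<lambda>y. c * h y)"
    using integral_mult[OF cont_int[OF hc], of c "y0 - pi" "y0 + pi"] bump_shift[of y0 r]
    unfolding I_def h_def by simp
  also have "\<dots> \<le> integral {y0 - pi..y0 + pi} (\<lambda>y. h y * \<rho>t t y)"
  proof (rule integral_le)
    show "(\<lambda>y. h y * \<rho>t t y) integrable_on {y0 - pi..y0 + pi}"
      by (rule cont_int) (intro continuous_intros hc rhot_cont[OF t])
    show "(\<lambda>y. c * h y) integrable_on {y0 - pi..y0 + pi}"
      by (rule cont_int) (intro continuous_intros hc)
    fix y assume y: "y \<in> {y0 - pi..y0 + pi}"
    show "c * h y \<le> h y * \<rho>t t y"
    proof (cases "h y = 0")
      case False
      then have hp: "h y > 0" using hnn[of y] by simp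
      have "\<bar>y - y0\<bar> < r" using bump_supp[of "y - y0" r] y hp r unfolding h_def by auto
      then have "dist y y0 < d" using r by (simp add: dist_real_def)
      then have "c < \<rho>t t y" using d(2)[of y] by (simp add: dist_real_def)
      then show ?thesis using hp by (simp add: mult.commute)
    qed simp
  qed
  also have "\<dots> = integral {x0 - pi..x0 + pi} (\<lambda>x. h (X t x) * \<rho> x)"
    unfolding h_def by (rule window_eq[OF t _ x0, symmetric]) (use r in auto)
  also have "\<dots> \<le> integral {x0 - pi..x0 + pi} (\<lambda>x. Mr * h (X t x))"
  proof (rule integral_le)
    show "(\<lambda>x. Mr * h (X t x)) integrable_on {x0 - pi..x0 + pi}"
      by (rule cont_int) (intro continuous_intros hXc)
    show "(\<lambda>x. h (X t x) * \<rho> x) integrable_on {x0 - pi..x0 + pi}"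
      by (rule cont_int) (intro continuous_intros hXc rho_cont)
    fix x show "h (X t x) * \<rho> x \<le> Mr * h (X t x)"
      using Mr[of x] hnn[of "X t x"] by (simp add: mult.commute mult_right_mono)
  qed
  also have "\<dots> = Mr * integral {x0 - pi..x0 + pi} (\<lambda>x. h (X t x))"
    by (rule integral_mult[OF cont_int[OF hXc], symmetric])
  also have "\<dots> \<le> Mr * integral {x0 - pi..x0 + pi} (\<lambda>x. bump r ((1/K) * (x - x0)))"
  proof (intro mult_left_mono integral_le Mr0)
    show "(\<lambda>x. bump r ((1/K) * (x - x0))) integrable_on {x0 - pi..x0 + pi}"
      by (rule cont_int) (rule continuous_on_compose2[OF bump_cont], use K in \<open>auto intro!: continuous_intros\<close>)
    show "(\<lambda>x. h (X t x)) integrable_on {x0 - pi..x0 + pi}" by (rule cont_int[OF hXc])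
    fix x assume x: "x \<in> {x0 - pi..x0 + pi}"
    have xx: "\<bar>x - x0\<bar> \<le> pi" using x by auto
    define \<delta> where "\<delta> = \<bar>x - x0\<bar> / K"
    have \<delta>: "0 \<le> \<delta>" "\<delta> \<le> pi"
      using xx K unfolding \<delta>_def by (auto simp: divide_le_eq intro: order_trans)
    have "cos (X t x - y0) \<le> cos \<delta>"
    proof (rule cos_le_circ[OF \<delta>])
      fix k :: int
      have e: "X t x - y0 - 2*pi * of_int k = X t x - X t (x0 + 2*pi * of_int k)"
        using X_shift_int[OF t, of x0 k] x0 by simp
      have "\<bar>x - (x0 + 2*pi * of_int k)\<bar> \<le> K * \<bar>X t x - X t (x0 + 2*pi * of_int k)\<bar>"
        by (rule X_compare(2)[OF t])
      moreover have "\<bar>x - x0\<bar> \<le> \<bar>x - (x0 + 2*pi * of_int k)\<bar>"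
        using circ_dist[OF xx, of k] by (simp add: algebra_simps)
      ultimately have "\<bar>x - x0\<bar> \<le> K * \<bar>X t x - y0 - 2*pi * of_int k\<bar>" unfolding e by linarith
      then show "\<delta> \<le> \<bar>X t x - y0 - 2*pi * of_int k\<bar>"
        unfolding \<delta>_def using K by (simp add: divide_le_eq mult.commute)
    qed
    moreover have "cos \<delta> = cos ((1/K) * (x - x0))"
    proof -
      have "\<bar>(1/K) * (x - x0)\<bar> = \<delta>" unfolding \<delta>_def using K by (simp add: abs_mult)
      then show ?thesis using cos_abs_real[of "(1/K) * (x - x0)"] by simp
    qed
    ultimately show "h (X t x) \<le> bump r ((1/K) * (x - x0))" unfolding h_def by (intro bump_mono) simp
  qed
  also have "integral {x0 - pi..x0 + pi} (\<lambda>x. bump r ((1/K) * (x - x0))) = integral {-(pi/K)..pi/K} (bump r) * K"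
    using affine_subst[OF bump_cont, of "1/K" "pi/K" x0 r] K by simp
  also have "integral {-(pi/K)..pi/K} (bump r) \<le> I"
    unfolding I_def
  proof (rule integral_subset_le)
    have "pi / K \<le> pi" using K by (simp add: divide_le_eq)
    then show "{-(pi/K)..pi/K} \<subseteq> {-pi..pi}" by auto
  qed (use cont_int[OF bump_cont] bump_nn in auto)
  finally have "c * I \<le> Mr * (I * K)" using Mr0 K by (simp add: mult_left_mono mult_right_mono)
  then have "c * I \<le> (Mr * K) * I" by (simp add: algebra_simps)
  then have "c \<le> Mr * K" using Ipos mult_le_cancel_right_pos by blast
  then show False using c(1) by simp
qed

end

context setting2 begin

lemma gdiff: "t \<in> T \<Longrightarrow> (g t has_real_derivative deriv (g t) y) (at y)"
  using g_C2[of t] unfolding Cn_def DERIV_deriv_iff_real_differentiable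
  by (metis funpow_0 zero_less_numeral)

lemma gcont: "t \<in> T \<Longrightarrow> continuous_on UNIV (g t)"
  using gdiff by (meson DERIV_isCont continuous_at_imp_continuous_on)

lemma G_per: assumes t: "t \<in> T" shows "periodic2pi (G t)"
  unfolding periodic2pi_def
proof
  fix x
  have "((\<lambda>s. g s x) has_real_derivative G t (x + 2*pi)) (at t within T)"
    by (rule has_field_derivative_transform_within[OF Gd[OF t, of "x + 2*pi"], of 1])
       (use t g_per in \<open>auto simp: periodic2pi_def\<close>)
  then show "G t (x + 2*pi) = G t x" using Gd[OF t, of x] deriv_unique_T[OF t] by blast
qed

definition GM where "GM = (SOME M. M \<ge> 0 \<and> (\<forall>t\<in>T. \<forall>x. \<bar>G t x\<bar> \<le> M))"

lemma GM: "GM \<ge> 0" "t \<in> T \<Longrightarrow> \<bar>G t x\<bar> \<le> GM"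
proof -
  obtain M where "\<forall>t\<in>T. \<forall>x. \<bar>G t x\<bar> \<le> M" using bdd_periodic2[OF Gc G_per] by blast
  then have "\<exists>M. M \<ge> 0 \<and> (\<forall>t\<in>T. \<forall>x. \<bar>G t x\<bar> \<le> M)"
    by (intro exI[of _ "max 0 M"]) (auto simp: le_max_iff_disj)
  from someI_ex[OF this] show "GM \<ge> 0" "t \<in> T \<Longrightarrow> \<bar>G t x\<bar> \<le> GM" unfolding GM_def by auto
qed

definition gM where "gM = (SOME M. \<forall>t\<in>T. \<forall>x. \<bar>g t x\<bar> \<le> M)"

lemma gM: "t \<in> T \<Longrightarrow> \<bar>g t x\<bar> \<le> gM"
proof -
  obtain M0 where M0: "\<And>x. \<bar>g 0 x\<bar> \<le> M0" using bdd_periodic1[OF gcont g_per, of 0] by auto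
  have "\<bar>g s y\<bar> \<le> M0 + GM" if s: "s \<in> T" for s y
  proof -
    have "\<bar>g s y - g 0 y\<bar> \<le> GM * \<bar>s - 0\<bar>"
      by (rule lip_S[where S=T and f'="\<lambda>s. G s y"]) (use Gd GM s in auto)
    moreover have "GM * s \<le> GM" using s GM(1) mult_left_le[of s GM] by auto
    ultimately show ?thesis using M0[of y] s by auto
  qed
  then have "\<exists>M. \<forall>t\<in>T. \<forall>x. \<bar>g t x\<bar> \<le> M" by blast
  from someI_ex[OF this] show "t \<in> T \<Longrightarrow> \<bar>g t x\<bar> \<le> gM" unfolding gM_def by auto
qed

definition a where "a s = Tint (\<lambda>y. deriv (g s) y * deriv (\<phi> s) y) / Tint (\<lambda>y. 1 / \<rho>t s y)"

lemma rhot_pos: "t \<in> T \<Longrightarrow> \<rho>t t y > 0"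
  using rhot_lower[of t y] mr(1) K_ge1 by (meson divide_pos_pos less_le_trans zero_less_one)

lemma G_eq: assumes t: "t \<in> T" shows "G t x = - deriv (g t) x * px t x + a t / \<rho>t t x"
proof -
  have "G t x = - deriv (g t) x * deriv (\<phi> t) x
            + Tint (\<lambda>y. deriv (g t) y * deriv (\<phi> t) y) * (1 / (Tint (\<lambda>y. 1 / \<rho>t t y) * \<rho>t t x))"
    using deriv_unique_T[OF t Gd[OF t, of x] g_eq[OF t, of x]] .
  then show ?thesis unfolding a_def using deriv_phi[OF t] by simp
qed

lemma a_bound: assumes t: "t \<in> T" shows "\<bar>a t\<bar> \<le> GM * (Mr * K)"
proof -
  have pc: "continuous_on UNIV (\<phi> t)" using px[OF t] by (meson DERIV_isCont continuous_at_imp_continuous_on)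
  obtain y where y: "\<And>x. \<phi> t x \<le> \<phi> t y" using max_periodic[OF pc phi_per[OF t]] by blast
  have "px t y = 0" by (rule DERIV_local_max[OF px[OF t], of 1]) (use y in auto)
  then have "G t y = a t / \<rho>t t y" using G_eq[OF t, of y] by simp
  then have "a t = G t y * \<rho>t t y" using rhot_pos[OF t, of y] by simp
  then have "\<bar>a t\<bar> = \<bar>G t y\<bar> * \<rho>t t y" using rhot_pos[OF t, of y] by (simp add: abs_mult)
  also have "\<dots> \<le> GM * (Mr * K)"
    by (rule mult_mono) (use GM(1) GM(2)[OF t] rhot_upper[OF t] rhot_pos[OF t, of y] in auto)
  finally show ?thesis .
qed

lemma u_deriv: assumes t: "t \<in> T"
  shows "((\<lambda>s. g s (X s x)) has_real_derivative a t / \<rho>t t (X t x)) (at t within T)"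
proof -
  have "((\<lambda>s. g s (X s x)) has_real_derivative (G t (X t x) + deriv (g t) (X t x) * px t (X t x))) (at t within T)"
    by (rule joint_chain[OF Gc Gd gdiff[OF t] X_deriv[OF t] t])
  then show ?thesis using G_eq[OF t, of "X t x"] by simp
qed

end

context setting2 begin

definition ff where "ff s x = (g s (X s x))^2 * \<rho> x"
definition ff' where "ff' s x = 2 * g s (X s x) * (a s / \<rho>t s (X s x)) * \<rho> x"

lemma ff_deriv: "s \<in> T \<Longrightarrow> ((\<lambda>s. ff s x) has_real_derivative ff' s x) (at s within T)"
  unfolding ff_def ff'_def using u_deriv[of s x]
  by (auto intro!: derivative_eq_intros simp: algebra_simps)

lemma ff_cont: "s \<in> T \<Longrightarrow> continuous_on UNIV (ff s)"
  unfolding ff_def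
  by (intro continuous_intros rho_cont continuous_on_compose2[OF gcont X_cont]) auto

lemma ff_bound: "s \<in> T \<Longrightarrow> \<bar>ff s x\<bar> \<le> gM^2 * Mr"
proof -
  assume s: "s \<in> T"
  have "\<bar>ff s x\<bar> = \<bar>g s (X s x)\<bar>^2 * \<rho> x" unfolding ff_def using rho_pos[of x] by (simp add: abs_mult)
  also have "\<dots> \<le> gM^2 * Mr"
    by (intro mult_mono power_mono) (use gM[OF s] Mr rho_pos[of x] in auto)
  finally show ?thesis .
qed

lemma ff'_bound: "s \<in> T \<Longrightarrow> \<bar>ff' s x\<bar> \<le> 2 * gM * (GM * (Mr * K) / (mr / K)) * Mr"
proof -
  assume s: "s \<in> T"
  have g0: "gM \<ge> 0" using gM[OF s, of 0] by simp
  have q: "\<bar>a s / \<rho>t s (X s x)\<bar> \<le> GM * (Mr * K) / (mr / K)"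
  proof -
    have "\<bar>a s / \<rho>t s (X s x)\<bar> = \<bar>a s\<bar> / \<rho>t s (X s x)"
      using rhot_pos[OF s, of "X s x"] by (simp add: abs_divide)
    also have "\<dots> \<le> GM * (Mr * K) / (mr / K)"
      by (rule frac_le) (use a_bound[OF s] rhot_lower[OF s] mr(1) K_ge1 in auto)
    finally show ?thesis .
  qed
  have "\<bar>ff' s x\<bar> = 2 * \<bar>g s (X s x)\<bar> * \<bar>a s / \<rho>t s (X s x)\<bar> * \<rho> x"
    unfolding ff'_def using rho_pos[of x] by (simp add: abs_mult)
  also have "\<dots> \<le> 2 * gM * (GM * (Mr * K) / (mr / K)) * Mr"
  proof -
    have Mr0: "Mr \<ge> 0" using Mr[of 0] rho_pos[of 0] by simp
    have nn: "0 \<le> GM * (Mr * K) / (mr / K)" using GM(1) Mr0 K_ge1 mr(1) by simp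
    have nn2: "0 \<le> 2 * gM * (GM * (Mr * K) / (mr / K))" by (rule mult_nonneg_nonneg) (use nn g0 in auto)
    show ?thesis by (intro mult_mono) (use gM[OF s] q Mr rho_pos[of x] g0 nn nn2 in auto)
  qed
  finally show ?thesis .
qed

lemma F_deriv: "t \<in> T \<Longrightarrow> ((\<lambda>s. Tint (ff s)) has_real_derivative Tint (ff' t)) (at t within T)"
  by (rule deriv_Tint[OF _ ff_deriv ff_cont ff_bound ff'_bound])

lemma F'_zero: assumes t: "t \<in> T" shows "Tint (ff' t) = 0"
proof -
  define k where "k y = g t y / \<rho>t t y" for y
  have kc: "continuous_on UNIV k" unfolding k_def
    by (intro continuous_intros gcont[OF t] rhot_cont[OF t]) (metis rhot_pos[OF t] less_irrefl)
  have kp: "periodic2pi k" using g_per[OF t] rhot_per[OF t] unfolding k_def periodic2pi_def by simp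
  have "ff' t = (\<lambda>x. (2 * a t) * (k (X t x) * \<rho> x))" unfolding ff'_def k_def by (auto simp: fun_eq_iff)
  then have "Tint (ff' t) = (2 * a t) * Tint (\<lambda>x. k (X t x) * \<rho> x)" unfolding Tint_def by simp
  also have "Tint (\<lambda>x. k (X t x) * \<rho> x) = Tint (\<lambda>y. k y * \<rho>t t y)" by (rule push[OF t kc kp])
  also have "(\<lambda>y. k y * \<rho>t t y) = g t" unfolding k_def using rhot_pos[OF t] by (auto simp: fun_eq_iff less_imp_neq[symmetric])
  finally show ?thesis using g_mean[OF t] by simp
qed

lemma F_const: assumes t: "t \<in> T" shows "Tint (ff t) = Tint (ff 0)"
proof -
  obtain \<xi> where "\<xi> \<in> {0..t}" "Tint (ff t) - Tint (ff 0) = Tint (ff' \<xi>) * (t - 0)"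
    using mvt_S[of 0 t T "\<lambda>s. Tint (ff s)" "\<lambda>s. Tint (ff' s)"] t F_deriv by auto
  moreover have "\<xi> \<in> T" using calculation(1) t by auto
  ultimately show ?thesis using F'_zero by simp
qed

lemma main: "\<forall>t\<in>{0..1}. Tint (\<lambda>x. \<bar>g t x\<bar>^2 * \<rho>t t x) = Tint (\<lambda>x. \<bar>g 0 x\<bar>^2 * \<rho> x)"
proof
  fix t :: real assume t: "t \<in> {0..1}"
  have hc: "continuous_on UNIV (\<lambda>y. \<bar>g t y\<bar>^2)" by (intro continuous_intros gcont[OF t])
  have hp: "periodic2pi (\<lambda>y. \<bar>g t y\<bar>^2)" using g_per[OF t] unfolding periodic2pi_def by simp
  have "Tint (\<lambda>x. \<bar>g t x\<bar>^2 * \<rho>t t x) = Tint (ff t)"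
    unfolding ff_def using push[OF t hc hp] by simp
  also have "\<dots> = Tint (ff 0)" by (rule F_const[OF t])
  also have "\<dots> = Tint (\<lambda>x. \<bar>g 0 x\<bar>^2 * \<rho> x)" unfolding ff_def using X0 by simp
  finally show "Tint (\<lambda>x. \<bar>g t x\<bar>^2 * \<rho>t t x) = Tint (\<lambda>x. \<bar>g 0 x\<bar>^2 * \<rho> x)" .
qed

end

theorem proposition3p5:
  fixes \<rho> :: "real \<Rightarrow> real"
    and \<phi> :: "real \<Rightarrow> real \<Rightarrow> real"
    and X :: "real \<Rightarrow> real \<Rightarrow> real"
    and \<rho>t :: "real \<Rightarrow> real \<Rightarrow> real"
    and g :: "real \<Rightarrow> real \<Rightarrow> real"
  assumes rho_smooth: "smooth1 \<rho>" and rho_per: "periodic2pi \<rho>"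
    and rho_pos: "\<And>x. \<rho> x > 0" and rho_prob: "Tint \<rho> = 1"
    and phi_smooth: "smooth2 ({0..1} \<times> UNIV) (\<lambda>(t, x). \<phi> t x)"
    and phi_per: "\<And>t. t \<in> {0..1} \<Longrightarrow> periodic2pi (\<phi> t)"
    and X0: "\<And>x. X 0 x = x"
    and X_flow: "\<And>t x. t \<in> {0..1} \<Longrightarrow>
        ((\<lambda>s. X s x) has_real_derivative deriv (\<phi> t) (X t x)) (at t within {0..1})"
    and rhot_cont: "\<And>t. t \<in> {0..1} \<Longrightarrow> continuous_on UNIV (\<rho>t t)"
    and rhot_per: "\<And>t. t \<in> {0..1} \<Longrightarrow> periodic2pi (\<rho>t t)"
    and rhot_nonneg: "\<And>t x. t \<in> {0..1} \<Longrightarrow> \<rho>t t x \<ge> 0"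
    and rhot_push: "\<And>t. t \<in> {0..1} \<Longrightarrow>
        distr (density Tmeas (\<lambda>x. ennreal (\<rho> x))) Tmeas (\<lambda>x. tmod (X t x))
          = density Tmeas (\<lambda>y. ennreal (\<rho>t t y))"
    and g_C2: "\<And>t. t \<in> {0..1} \<Longrightarrow> Cn 2 (g t)"
    and g_per: "\<And>t. t \<in> {0..1} \<Longrightarrow> periodic2pi (g t)"
    and g_C1t: "\<exists>G. continuous_on ({0..1} \<times> UNIV) (\<lambda>(t, x). G t x) \<and>
        (\<forall>t\<in>{0..1}. \<forall>x. ((\<lambda>s. g s x) has_real_derivative G t x) (at t within {0..1}))"
    and g_mean: "\<And>t. t \<in> {0..1} \<Longrightarrow> Tint (g t) = 0"
    and g_eq: "\<And>t x. t \<in> {0..1} \<Longrightarrow>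
        ((\<lambda>s. g s x) has_real_derivative
           (- deriv (g t) x * deriv (\<phi> t) x
            + Tint (\<lambda>y. deriv (g t) y * deriv (\<phi> t) y)
              * (1 / (Tint (\<lambda>y. 1 / \<rho>t t y) * \<rho>t t x))))
         (at t within {0..1})"
  shows "\<forall>t\<in>{0..1}. Tint (\<lambda>x. \<bar>g t x\<bar>^2 * \<rho>t t x) = Tint (\<lambda>x. \<bar>g 0 x\<bar>^2 * \<rho> x)"
proof -
  interpret S: setting \<rho> \<phi> X \<rho>t g
    by (unfold_locales; (rule assms)?; assumption?)
  obtain px pxx where P: "\<forall>t\<in>{0..1}. \<forall>x. (\<phi> t has_real_derivative px t x) (at x)"
      "\<forall>t\<in>{0..1}. \<forall>x. (px t has_real_derivative pxx t x) (at x)"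
      "continuous_on ({0..1} \<times> UNIV) (\<lambda>(t, x). pxx t x)"
    using S.phi_derivs by blast
  obtain G where G: "continuous_on ({0..1} \<times> UNIV) (\<lambda>(t, x). G t x)"
      "\<forall>t\<in>{0..1}. \<forall>x. ((\<lambda>s. g s x) has_real_derivative G t x) (at t within {0..1})"
    using g_C1t by blast
  interpret S2: setting2 \<rho> \<phi> X \<rho>t g px pxx G
    by unfold_locales (use P G in auto)
  show ?thesis by (rule S2.main)
qed

end
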